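(* Let $X$ be a Tychonoff space and let $\upsilon$ be a finite-component cover of $X$. Then the family $$\exp_\beta\upsilon=\{O\langle U_1,\dots,U_n\rangle\cap\exp_\beta X:\ U_i\in\upsilon,\ i=1,\dots,n;\ n\in\mathbb N\}$$ is a finite-component cover of the space $\exp_\beta X$.
   Context: All spaces are $T_1$. A collection $\omega$ of subsets of a set is star-finite if each element of $\omega$ meets only finitely many elements of $\omega$. A finite sequence $M_0,\dots,M_s$ of sets is a chain connecting $M_0$ and $M_s$ if $M_{i-1}\cap M_i\neq\varnothing$ for $i=1,\dots,s$; a collection is connected if any two of its members are connected by a chain in it; the maximal connected subcollections of $\omega$ are the components of $\omega$. A finite-component cover of a space is a star-finite open cover each of whose components has finitely many elements. For a space $Z$, $\exp Z$ is the set of nonempty closed subsets of $Z$ with the Vietoris topology, whose base consists of the sets $O\langle U_1,\dots,U_n\rangle=\{F\in\exp Z: F\subset\bigcup_{i=1}^n U_i,\ F\cap U_i\neq\varnothing\ (i=1,\dots,n)\}$, $U_i$ nonempty open in $Z$. For a Tychonoff space $X$, $\exp_\beta X=\{F\in\exp\beta X: F\subset X\}$ (the nonempty compact subsets of $X$) with the subspace topology from $\exp\beta X$, where $\beta X$ is the Stone–Čech compactification. *)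

theory Defs
  imports "HOL-Analysis.Analysis"
begin

definition tychonoff_space :: "'a topology \<Rightarrow> bool" where
  "tychonoff_space X \<longleftrightarrow> t1_space X \<and> completely_regular_space X"

definition stone_cech :: "'a topology \<Rightarrow> 'b topology \<Rightarrow> ('a \<Rightarrow> 'b) \<Rightarrow> bool" where
  "stone_cech X K e \<longleftrightarrow>
     compact_space K \<and> Hausdorff_space K \<and> embedding_map X K e \<and>
     K closure_of (e ` topspace X) = topspace K \<and>
     (\<forall>f. continuous_map X euclideanreal f \<and> bounded (f ` topspace X) \<longrightarrow>
        (\<exists>g. continuous_map K euclideanreal g \<and> (\<forall>x\<in>topspace X. g (e x) = f x)))"

definition vietoris_basic :: "'a topology \<Rightarrow> 'a set set \<Rightarrow> 'a set set" where
  "vietoris_basic Z Us = {F. closedin Z F \<and> F \<noteq> {} \<and> F \<subseteq> \<Union>Us \<and> (\<forall>U\<in>Us. F \<inter> U \<noteq> {})}"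

definition vietoris :: "'a topology \<Rightarrow> 'a set topology" where
  "vietoris Z = topology_generated_by
     {vietoris_basic Z Us | Us. finite Us \<and> Us \<noteq> {} \<and>
        (\<forall>U\<in>Us. openin Z U \<and> U \<noteq> {})}"

definition exp_beta :: "'a topology \<Rightarrow> 'b topology \<Rightarrow> ('a \<Rightarrow> 'b) \<Rightarrow> 'b set topology" where
  "exp_beta X K e = subtopology (vietoris K)
     {F \<in> topspace (vietoris K). F \<subseteq> e ` topspace X}"

definition exp_beta_family ::
  "'a topology \<Rightarrow> 'b topology \<Rightarrow> ('a \<Rightarrow> 'b) \<Rightarrow> 'a set set \<Rightarrow> 'b set set set" where
  "exp_beta_family X K e \<upsilon> =
     {{F \<in> topspace (exp_beta X K e). F \<subseteq> e ` \<Union>Us \<and> (\<forall>U\<in>Us. F \<inter> e ` U \<noteq> {})}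
      | Us. finite Us \<and> Us \<noteq> {} \<and> Us \<subseteq> \<upsilon>}"

definition star_finite :: "'a set set \<Rightarrow> bool" where
  "star_finite \<omega> \<longleftrightarrow> (\<forall>W\<in>\<omega>. finite {V \<in> \<omega>. V \<inter> W \<noteq> {}})"

text \<open>Two members are linked by a chain iff they are related by the reflexive-transitive
  closure of the "meets" relation on the collection.\<close>
definition meets_rel :: "'a set set \<Rightarrow> ('a set \<times> 'a set) set" where
  "meets_rel \<omega> = {(V, W). V \<in> \<omega> \<and> W \<in> \<omega> \<and> V \<inter> W \<noteq> {}}"

definition component_of_family :: "'a set set \<Rightarrow> 'a set \<Rightarrow> 'a set set" where
  "component_of_family \<omega> W = {V \<in> \<omega>. (W, V) \<in> (meets_rel \<omega>)\<^sup>*}"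

definition open_cover :: "'a topology \<Rightarrow> 'a set set \<Rightarrow> bool" where
  "open_cover Y \<omega> \<longleftrightarrow> (\<forall>W\<in>\<omega>. openin Y W) \<and> \<Union>\<omega> = topspace Y"

definition finite_component_cover :: "'a topology \<Rightarrow> 'a set set \<Rightarrow> bool" where
  "finite_component_cover Y \<omega> \<longleftrightarrow>
     open_cover Y \<omega> \<and> star_finite \<omega> \<and> (\<forall>W\<in>\<omega>. finite (component_of_family \<omega> W))"

end

theory Submission
  imports Defs
begin

lemma meet_lemma:
  assumes inj: "inj_on e (topspace X)"
    and sub: "\<forall>U\<in>\<upsilon>. U \<subseteq> topspace X"
    and Us: "Us \<subseteq> \<upsilon>" and Vs: "Vs \<subseteq> \<upsilon>"
    and F1: "F \<subseteq> e ` \<Union>Us"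
    and F2: "\<forall>V\<in>Vs. F \<inter> e ` V \<noteq> {}"
    and V: "V \<in> Vs"
  shows "\<exists>U\<in>Us. U \<inter> V \<noteq> {}"
proof -
  from F2 V obtain y where y: "y \<in> F" "y \<in> e ` V" by blast
  then obtain x where x: "x \<in> V" "y = e x" by blast
  from y F1 obtain x' U where x': "x' \<in> U" "U \<in> Us" "y = e x'" by blast
  have "x \<in> topspace X" using x V Vs sub by blast
  moreover have "x' \<in> topspace X" using x' Us sub by blast
  ultimately have "x = x'" using inj x x' by (metis inj_onD)
  thus ?thesis using x x' by blast
qed

theorem lemma3:
  fixes X :: "'a topology" and K :: "'b topology" and e :: "'a \<Rightarrow> 'b"
    and \<upsilon> :: "'a set set"
  assumes "tychonoff_space X"
    and "stone_cech X K e"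
    and "finite_component_cover X \<upsilon>"
  shows "finite_component_cover (exp_beta X K e) (exp_beta_family X K e \<upsilon>)"
proof -
  have emb: "embedding_map X K e" and cK: "compact_space K"
    using assms(2) unfolding stone_cech_def by auto
  have hom: "homeomorphic_map X (subtopology K (e ` topspace X)) e"
    using emb unfolding embedding_map_def .
  have inj: "inj_on e (topspace X)"
    using hom homeomorphic_imp_injective_map by blast
  have opU: "\<forall>U\<in>\<upsilon>. openin X U" and covU: "\<Union>\<upsilon> = topspace X"
    and sf: "star_finite \<upsilon>" and fc: "\<forall>W\<in>\<upsilon>. finite (component_of_family \<upsilon> W)"
    using assms(3) unfolding finite_component_cover_def open_cover_def by auto
  have sub: "\<forall>U\<in>\<upsilon>. U \<subseteq> topspace X" using opU openin_subset by blast
  define E where "E = {F \<in> topspace (vietoris K). F \<subseteq> e ` topspace X}"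
  have tsE: "topspace (exp_beta X K e) = E"
    unfolding exp_beta_def E_def by auto
  define fam where "fam Us = {F \<in> E. F \<subseteq> e ` \<Union>Us \<and> (\<forall>U\<in>Us. F \<inter> e ` U \<noteq> {})}" for Us
  define Idx where "Idx = {Us. finite Us \<and> Us \<noteq> {} \<and> Us \<subseteq> \<upsilon>}"
  have famdef: "exp_beta_family X K e \<upsilon> = fam ` Idx"
    unfolding exp_beta_family_def fam_def Idx_def tsE by auto
  define star where "star Us = {V \<in> \<upsilon>. \<exists>U\<in>Us. U \<inter> V \<noteq> {}}" for Us
  have star_fin: "finite (star Us)" if "finite Us" "Us \<subseteq> \<upsilon>" for Us
  proof -
    have "star Us \<subseteq> (\<Union>U\<in>Us. {V \<in> \<upsilon>. V \<inter> U \<noteq> {}})" unfolding star_def by blast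
    moreover have "finite (\<Union>U\<in>Us. {V \<in> \<upsilon>. V \<inter> U \<noteq> {}})"
      using that sf unfolding star_finite_def by blast
    ultimately show ?thesis by (rule finite_subset)
  qed
  have meet: "Vs \<subseteq> star Us" if mh: "Us \<subseteq> \<upsilon>" "Vs \<subseteq> \<upsilon>" "fam Us \<inter> fam Vs \<noteq> {}" for Us Vs
  proof
    fix V assume V: "V \<in> Vs"
    from mh obtain F where "F \<in> fam Us" "F \<in> fam Vs" by blast
    hence F12: "F \<subseteq> e ` \<Union>Us" "\<forall>V\<in>Vs. F \<inter> e ` V \<noteq> {}" unfolding fam_def by auto
    obtain U where "U \<in> Us" "U \<inter> V \<noteq> {}"
      using meet_lemma[OF inj sub mh(1,2) F12 V] by blast
    thus "V \<in> star Us" unfolding star_def using V mh by blast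
  qed
  have opens: "openin (exp_beta X K e) (fam Us)" if "Us \<in> Idx" for Us
  proof (cases "\<exists>U\<in>Us. U = {}")
    case True
    then have "fam Us = {}" unfolding fam_def by auto
    thus ?thesis by simp
  next
    case False
    have "\<forall>U\<in>Us. \<exists>U'. openin K U' \<and> e ` U = U' \<inter> e ` topspace X"
    proof
      fix U assume "U \<in> Us"
      hence "openin X U" using that opU unfolding Idx_def by blast
      hence "openin (subtopology K (e ` topspace X)) (e ` U)"
        using hom homeomorphic_map_openness_eq by blast
      thus "\<exists>U'. openin K U' \<and> e ` U = U' \<inter> e ` topspace X"
        unfolding openin_subtopology by blast
    qed
    then obtain g where g: "\<And>U. U \<in> Us \<Longrightarrow> openin K (g U) \<and> e ` U = g U \<inter> e ` topspace X"
      by metis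
    have fin: "finite Us" "Us \<noteq> {}" "Us \<subseteq> \<upsilon>" using that unfolding Idx_def by auto
    have gne: "g U \<noteq> {}" if "U \<in> Us" for U
      using g[OF that] False that by auto
    have B: "openin (vietoris K) (vietoris_basic K (g ` Us))"
      unfolding vietoris_def
      apply (rule topology_generated_by_Basis, rule CollectI, rule exI[where x="g ` Us"])
      using fin g gne by auto
    have eq: "fam Us = vietoris_basic K (g ` Us) \<inter> E"
    proof (rule set_eqI, rule iffI)
      fix F assume F: "F \<in> fam Us"
      hence FE: "F \<in> E" and F1: "F \<subseteq> e ` \<Union>Us" and F2: "\<forall>U\<in>Us. F \<inter> e ` U \<noteq> {}"
        unfolding fam_def by auto
      from FE have "F \<in> topspace (vietoris K)" unfolding E_def by auto
      then obtain Vs where "F \<in> vietoris_basic K Vs"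
        unfolding vietoris_def topology_generated_by_topspace by blast
      hence cl: "closedin K F" "F \<noteq> {}" unfolding vietoris_basic_def by auto
      have "F \<subseteq> \<Union>(g ` Us)" using F1 g by blast
      moreover have "\<forall>W\<in>g ` Us. F \<inter> W \<noteq> {}" using F2 g by blast
      ultimately show "F \<in> vietoris_basic K (g ` Us) \<inter> E"
        using cl FE unfolding vietoris_basic_def by auto
    next
      fix F assume F: "F \<in> vietoris_basic K (g ` Us) \<inter> E"
      hence FE: "F \<in> E" and F1: "F \<subseteq> \<Union>(g ` Us)" and F2: "\<forall>W\<in>g ` Us. F \<inter> W \<noteq> {}"
        and FX: "F \<subseteq> e ` topspace X"
        unfolding vietoris_basic_def E_def by auto
      have "F \<subseteq> e ` \<Union>Us"
      proof
        fix y assume "y \<in> F"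
        then obtain U where "U \<in> Us" "y \<in> g U" using F1 by blast
        moreover have "y \<in> e ` topspace X" using FX \<open>y \<in> F\<close> by blast
        ultimately have "y \<in> e ` U" using g by blast
        thus "y \<in> e ` \<Union>Us" using \<open>U \<in> Us\<close> by blast
      qed
      moreover have "\<forall>U\<in>Us. F \<inter> e ` U \<noteq> {}"
      proof
        fix U assume U: "U \<in> Us"
        then have "F \<inter> g U \<noteq> {}" using F2 by blast
        then show "F \<inter> e ` U \<noteq> {}" using g[OF U] FX by blast
      qed
      ultimately show "F \<in> fam Us" using FE unfolding fam_def by auto
    qed
    show ?thesis
      unfolding eq exp_beta_def E_def[symmetric] openin_subtopology using B by blast
  qed
  have cover: "\<Union>(fam ` Idx) = E"
  proof
    show "\<Union>(fam ` Idx) \<subseteq> E" unfolding fam_def by auto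
  next
    show "E \<subseteq> \<Union>(fam ` Idx)"
    proof
      fix F assume FE: "F \<in> E"
      hence FX: "F \<subseteq> e ` topspace X" and "F \<in> topspace (vietoris K)" unfolding E_def by auto
      then obtain Vs where "F \<in> vietoris_basic K Vs"
        unfolding vietoris_def topology_generated_by_topspace by blast
      hence cl: "closedin K F" "F \<noteq> {}" unfolding vietoris_basic_def by auto
      define C where "C = {x \<in> topspace X. e x \<in> F}"
      have eC: "e ` C = F" using FX unfolding C_def by auto
      have "compactin K F" using closedin_compact_space[OF cK cl(1)] .
      hence "compactin (subtopology K (e ` topspace X)) (e ` C)"
        using eC FX by (simp add: compactin_subtopology)
      hence cC: "compactin X C" using homeomorphic_map_compactness_eq[OF hom] C_def by auto
      obtain Fin where Fin: "finite Fin" "Fin \<subseteq> \<upsilon>" "C \<subseteq> \<Union>Fin"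
      proof -
        have "C \<subseteq> \<Union>\<upsilon>" using covU unfolding C_def by auto
        with cC opU show ?thesis unfolding compactin_def using that by blast
      qed
      define Us where "Us = {U \<in> \<upsilon>. U \<inter> C \<noteq> {}}"
      have "Us \<subseteq> star Fin"
        unfolding Us_def star_def using Fin(3) by blast
      hence finUs: "finite Us" using star_fin[OF Fin(1,2)] finite_subset by blast
      have CX: "C \<subseteq> topspace X" unfolding C_def by auto
      have CUs: "C \<subseteq> \<Union>Us" unfolding Us_def using CX covU by blast
      have "C \<noteq> {}" using eC cl(2) by auto
      hence "Us \<noteq> {}" using CUs by auto
      hence "Us \<in> Idx" unfolding Idx_def using finUs Us_def by auto
      moreover have "F \<in> fam Us"
        unfolding fam_def using FE eC CUs by (auto simp: Us_def)
      ultimately show "F \<in> \<Union>(fam ` Idx)" by blast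
    qed
  qed
  have sfam: "star_finite (fam ` Idx)"
    unfolding star_finite_def
  proof
    fix W assume "W \<in> fam ` Idx"
    then obtain Us where Us: "Us \<in> Idx" "W = fam Us" by blast
    have "{V \<in> fam ` Idx. V \<inter> W \<noteq> {}} \<subseteq> fam ` Pow (star Us)"
    proof
      fix V assume "V \<in> {V \<in> fam ` Idx. V \<inter> W \<noteq> {}}"
      then obtain Vs where "Vs \<in> Idx" "V = fam Vs" "fam Us \<inter> fam Vs \<noteq> {}" using Us by blast
      thus "V \<in> fam ` Pow (star Us)" using meet[of Us Vs] Us unfolding Idx_def by blast
    qed
    moreover have "finite (fam ` Pow (star Us))" using star_fin Us unfolding Idx_def by auto
    ultimately show "finite {V \<in> fam ` Idx. V \<inter> W \<noteq> {}}" by (rule finite_subset)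
  qed
  have fcomp: "finite (component_of_family (fam ` Idx) W)" if WI: "W \<in> fam ` Idx" for W
  proof -
    obtain Us where Us: "Us \<in> Idx" "W = fam Us" using WI by blast
    define S where "S = (\<Union>U\<in>Us. component_of_family \<upsilon> U)"
    have finS: "finite S" unfolding S_def using Us fc unfolding Idx_def by auto
    have S\<upsilon>: "S \<subseteq> \<upsilon>" unfolding S_def component_of_family_def by auto
    have UsS: "Us \<subseteq> S" unfolding S_def component_of_family_def using Us unfolding Idx_def by auto
    have starS: "star Vs \<subseteq> S" if VsS: "Vs \<subseteq> S" for Vs
    proof
      fix V' assume "V' \<in> star Vs"
      then obtain V where V: "V \<in> Vs" "V' \<in> \<upsilon>" "V \<inter> V' \<noteq> {}" unfolding star_def by blast
      then obtain U where U: "U \<in> Us" "(U, V) \<in> (meets_rel \<upsilon>)\<^sup>*" "V \<in> \<upsilon>"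
        using VsS unfolding S_def component_of_family_def by blast
      have "(V, V') \<in> meets_rel \<upsilon>" using V U unfolding meets_rel_def by auto
      hence "(U, V') \<in> (meets_rel \<upsilon>)\<^sup>*" using U by auto
      thus "V' \<in> S" unfolding S_def component_of_family_def using U V by blast
    qed
    have key: "\<exists>Vs. Vs \<subseteq> S \<and> V = fam Vs" if "(W, V) \<in> (meets_rel (fam ` Idx))\<^sup>*" for V
      using that
    proof (induction rule: rtrancl_induct)
      case base
      then show ?case using Us UsS by blast
    next
      case (step V1 V2)
      then obtain Vs where Vs: "Vs \<subseteq> S" "V1 = fam Vs" by blast
      from step(2) obtain Vs' where Vs': "Vs' \<in> Idx" "V2 = fam Vs'" "V1 \<inter> V2 \<noteq> {}"
        unfolding meets_rel_def by blast
      have "Vs' \<subseteq> star Vs" using meet[of Vs Vs'] Vs Vs' S\<upsilon> unfolding Idx_def by blast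
      hence "Vs' \<subseteq> S" using starS[OF Vs(1)] by blast
      thus ?case using Vs' by blast
    qed
    have "component_of_family (fam ` Idx) W \<subseteq> fam ` Pow S"
      unfolding component_of_family_def using key by blast
    moreover have "finite (fam ` Pow S)" using finS by simp
    ultimately show ?thesis by (rule finite_subset)
  qed
  show ?thesis
    unfolding finite_component_cover_def open_cover_def famdef tsE
    using opens cover sfam fcomp by auto
qed

end
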